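(* With $\Phi^{\cdot}:\mathcal{B}^{\cdot}\to K^{\cdot}$ as below, let $\tilde\Phi^{\cdot}$ be the composite of $\Phi^{\cdot}$ with restriction to the diagonal, $K^{-q}|_\Delta\cong\Omega^q_U$ (identifying $e^i|_\Delta$ with $dz^i$). Then for every $q\ge1$ and $f_0,\dots,f_{q+1}\in A$, $$\tilde\Phi^{-q}(f_0\otimes\cdots\otimes f_{q+1})=\frac{1}{q!}\,f_0(z)f_{q+1}(z)\,df_1\wedge\cdots\wedge df_q .$$
   Context: $U$ is a Stein open set with global holomorphic coordinates $z^1,\dots,z^n$, $A=\Gamma(U,\mathcal{O})$. On $U\times U$ use coordinates $(z,\zeta)$, $z=p_1^*z$, $\zeta=p_2^*z$. Bar complex: $\mathcal{B}^{-q}(A)=A^{\otimes(q+2)}$ over $\mathbb{C}$, with $\partial(f_0\otimes\cdots\otimes f_{q+1})=\sum_{i=0}^{q}(-1)^i f_0\otimes\cdots\otimes f_if_{i+1}\otimes\cdots\otimes f_{q+1}$. Koszul complex: $K^{-q}=\Lambda^q(\bigoplus_{i=1}^n\mathcal{O}_{U\times U}e^i)$, $d_K$ = contraction with $\sum_i(z^i-\zeta^i)\check e^i$. Homotopy $P(fe^I)=\sum_{j}\Big(\int_0^1t^{|I|}\frac{\partial f}{\partial z^j}(\zeta+t(z-\zeta),\zeta)dt\Big)e^j\wedge e^I$. $\Phi^{\cdot}$ is the $A^e$-linear map with $\Phi^0(f_0\otimes f_1)=f_0(z)f_1(\zeta)$ and $\Phi^{-q}(f_0\otimes\cdots\otimes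 f_{q+1})=f_0(z)\{P\Phi^{-(q-1)}(\partial(1\otimes f_1\otimes\cdots\otimes f_q\otimes 1))\}f_{q+1}(\zeta)$ for $1\le q\le n$, $\Phi^{-q}=0$ for $q>n$. *)

theory Defs
  imports "HOL-Analysis.Analysis"
begin

text \<open>Points of C^n are vectors complex^'n; the index type 'n carries a linear order,
 which plays the role of the ordering 1 < ... < n of the coordinates z^1,...,z^n.
 A (mixed-degree) element of the Koszul complex on U x U is given by its coefficients
 on the basis e^I = e^{i_1} wedge ... wedge e^{i_k} (i_1 < ... < i_k), I a set of indices;
 a differential form on U likewise by its coefficients on dz^I.\<close>

type_synonym 'n kform = "'n set \<Rightarrow> complex^'n \<Rightarrow> complex^'n \<Rightarrow> complex"
type_synonym 'n dform = "'n set \<Rightarrow> complex^'n \<Rightarrow> complex"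

definition holo_on :: "(complex^'n) set \<Rightarrow> (complex^'n \<Rightarrow> complex) \<Rightarrow> bool" where
  "holo_on U f \<longleftrightarrow> (\<forall>z\<in>U. \<exists>L. (f has_derivative L) (at z) \<and>
                        (\<forall>(c::complex) v. L (c *s v) = c * L v))"

definition holo_hull :: "(complex^'n) set \<Rightarrow> (complex^'n) set \<Rightarrow> (complex^'n) set" where
  "holo_hull U K = {x\<in>U. \<forall>f. holo_on U f \<longrightarrow> (\<exists>y\<in>K. norm (f x) \<le> norm (f y))}"

definition stein :: "(complex^'n) set \<Rightarrow> bool" where
  "stein U \<longleftrightarrow> open U \<and> (\<forall>K. compact K \<and> K \<subseteq> U \<longrightarrow> compact (holo_hull U K))"

definition pz :: "'n \<Rightarrow> (complex^'n \<Rightarrow> complex^'n \<Rightarrow> complex) \<Rightarrow> complex^'n \<Rightarrow> complex^'n \<Rightarrow> complex" where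
  "pz j F z w = deriv (\<lambda>c. F (\<chi> k. if k = j then c else z$k) w) (z$j)"

definition pd :: "'n \<Rightarrow> (complex^'n \<Rightarrow> complex) \<Rightarrow> complex^'n \<Rightarrow> complex" where
  "pd i f z = deriv (\<lambda>c. f (\<chi> k. if k = i then c else z$k)) (z$i)"

text \<open>Sign: e^j wedge e^I = wsign j I * e^(insert j I) for j not in I.\<close>
definition wsign :: "'n::linorder \<Rightarrow> 'n set \<Rightarrow> complex" where
  "wsign j I = (-1) ^ card {i\<in>I. i < j}"

definition KP :: "('n::{finite,linorder}) kform \<Rightarrow> 'n kform" where
  "KP \<omega> J z w = (\<Sum>j\<in>J. wsign j (J - {j}) *
      integral {0..1::real} (\<lambda>t. complex_of_real (t ^ card (J - {j})) *
          pz j (\<omega> (J - {j})) (w + t *\<^sub>R (z - w)) w))"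

text \<open>Bar differential on a pure tensor f_0 x ... x f_{q+1} (list of length q+2):
  list of (sign, pure tensor) summands.\<close>
definition bar_d :: "('a \<Rightarrow> complex) list \<Rightarrow> (complex \<times> ('a \<Rightarrow> complex) list) list" where
  "bar_d fs = map (\<lambda>i. ((-1) ^ i,
       take i fs @ [(\<lambda>x. (fs!i) x * (fs!(i+1)) x)] @ drop (i+2) fs)) [0..<length fs - 1]"

text \<open>Phi q fs = Phi^{-q}(f_0 x ... x f_{q+1}), fs = [f_0,...,f_{q+1}].\<close>
primrec Phi :: "nat \<Rightarrow> (complex^('n::{finite,linorder}) \<Rightarrow> complex) list \<Rightarrow> 'n kform" where
  "Phi 0 fs = (\<lambda>J z w. if J = {} then (fs!0) z * (fs!1) w else 0)"
| "Phi (Suc q) fs =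
     (if CARD('n) < Suc q then (\<lambda>J z w. 0)
      else (\<lambda>J z w. (fs!0) z *
              KP (\<lambda>I x y. sum_list (map (\<lambda>(s, gs). s * Phi q gs I x y)
                      (bar_d ([\<lambda>_. 1] @ take (Suc q) (drop 1 fs) @ [\<lambda>_. 1])))) J z w
              * (fs!(Suc q + 1)) w))"

definition Phi_tilde :: "nat \<Rightarrow> (complex^('n::{finite,linorder}) \<Rightarrow> complex) list \<Rightarrow> 'n dform" where
  "Phi_tilde q fs J z = Phi q fs J z z"

definition dfun :: "(complex^'n \<Rightarrow> complex) \<Rightarrow> 'n dform" where
  "dfun f J z = (if card J = 1 then pd (the_elem J) f z else 0)"

definition shuffle_sign :: "'n::linorder set \<Rightarrow> 'n set \<Rightarrow> complex" where
  "shuffle_sign I J = (-1) ^ card {(i, j). i \<in> I \<and> j \<in> J \<and> j < i}"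

definition wedge :: "('n::{finite,linorder}) dform \<Rightarrow> 'n dform \<Rightarrow> 'n dform" where
  "wedge \<alpha> \<beta> K z = (\<Sum>I\<in>Pow K. shuffle_sign I (K - I) * \<alpha> I z * \<beta> (K - I) z)"

definition form_one :: "'n dform" where
  "form_one J z = (if J = {} then 1 else 0)"

definition dwedge :: "(complex^('n::{finite,linorder}) \<Rightarrow> complex) list \<Rightarrow> 'n dform" where
  "dwedge fs = foldr wedge (map dfun fs) form_one"

end

theory Submission
  imports Defs "HOL-Complex_Analysis.Cauchy_Integral_Formula"
begin

definition upd :: "complex^'n \<Rightarrow> 'n \<Rightarrow> complex \<Rightarrow> complex^'n" where
  "upd y k c = (\<chi> i. if i = k then c else y$i)"

lemma upd_nth[simp]: "upd y k c $ i = (if i = k then c else y$i)"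
  by (simp add: upd_def)
lemma upd_same[simp]: "upd y k (y$k) = y"
  by (simp add: vec_eq_iff)
lemma upd_upd_same[simp]: "upd (upd y k c) k d = upd y k d"
  by (simp add: vec_eq_iff)
lemma upd_comm: "j \<noteq> k \<Longrightarrow> upd (upd y j c) k d = upd (upd y k d) j c"
  by (simp add: vec_eq_iff)
lemma upd_axis: "upd y k c = y + axis k (c - y$k)"
  by (simp add: vec_eq_iff axis_def)
lemma norm_axis_c: "norm (axis k (c::complex)) = norm c"
  by (simp add: norm_vec_def axis_def L2_set_def sum.delta' if_distrib[of "\<lambda>x. (norm x)^2"] cong: if_cong)
lemma dist_upd: "dist (upd y k c) (upd y k d) = cmod (c - d)"
proof -
  have "upd y k c - upd y k d = axis k (c - d)" by (simp add: vec_eq_iff axis_def)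
  then show ?thesis by (simp add: dist_norm norm_axis_c)
qed
lemma dist_upd2: "dist (upd y k c) y = cmod (c - y$k)"
  using dist_upd[of y k c "y$k"] by simp
lemma continuous_on_upd[continuous_intros]: "continuous_on S f \<Longrightarrow> continuous_on S g \<Longrightarrow> continuous_on S (\<lambda>x. upd (f x) k (g x))"
  unfolding upd_def apply (rule continuous_on_vec_lambda)
  subgoal for i by (cases "i = k") (auto intro: continuous_intros)
  done
lemma pd_upd_def: "pd k h y = deriv (\<lambda>c. h (upd y k c)) (y$k)"
  by (simp add: pd_def upd_def)
lemma pd_at_upd: "pd j h (upd p j c) = deriv (\<lambda>c'. h (upd p j c')) c"
  by (simp add: pd_upd_def)
lemma open_upd_set: "open B \<Longrightarrow> open {c. upd y k c \<in> B}"
  using continuous_on_upd[OF continuous_on_const continuous_on_id, of UNIV y k]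
  by (simp add: continuous_on_open_vimage vimage_def)

definition SH :: "(complex^'n) set \<Rightarrow> (complex^'n \<Rightarrow> complex) \<Rightarrow> bool" where
  "SH B h \<longleftrightarrow> continuous_on B h \<and> (\<forall>y\<in>B. \<forall>k. (\<lambda>c. h (upd y k c)) holomorphic_on {c. upd y k c \<in> B})"

lemma SH_cont: "SH B h \<Longrightarrow> continuous_on B h" by (simp add: SH_def)
lemma SH_hol: "SH B h \<Longrightarrow> y \<in> B \<Longrightarrow> (\<lambda>c. h (upd y k c)) holomorphic_on {c. upd y k c \<in> B}"
  by (simp add: SH_def)

lemma SH_deriv:
  assumes "open B" "SH B h" "y \<in> B"
  shows "((\<lambda>c. h (upd y k c)) has_field_derivative pd k h y) (at (y$k))"
proof -
  have "(\<lambda>c. h (upd y k c)) field_differentiable at (y$k)"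
    using SH_hol[OF assms(2,3), of k] open_upd_set[OF assms(1), of y k] assms(3)
    by (intro holomorphic_on_imp_differentiable_at) auto
  then show ?thesis by (simp add: pd_upd_def DERIV_deriv_iff_field_differentiable)
qed

lemma SH_deriv_at:
  assumes "open B" "SH B h" "upd y k c \<in> B"
  shows "((\<lambda>c. h (upd y k c)) has_field_derivative pd k h (upd y k c)) (at c)"
  using SH_deriv[OF assms, of k] by simp

lemma SH_add: "SH B f \<Longrightarrow> SH B g \<Longrightarrow> SH B (\<lambda>x. f x + g x)"
  unfolding SH_def by (auto intro: continuous_intros holomorphic_intros)
lemma SH_mult: "SH B f \<Longrightarrow> SH B g \<Longrightarrow> SH B (\<lambda>x. f x * g x)"
  unfolding SH_def by (auto intro: continuous_intros holomorphic_intros)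
lemma SH_const: "SH B (\<lambda>x. c)"
  unfolding SH_def by (auto intro: continuous_intros holomorphic_intros)
lemma SH_cmult: "SH B f \<Longrightarrow> SH B (\<lambda>x. c * f x)"
  using SH_mult[OF SH_const] by blast
lemma SH_sum: "(\<And>i. i \<in> I \<Longrightarrow> SH B (f i)) \<Longrightarrow> SH B (\<lambda>x. \<Sum>i\<in>I. f i x)"
  by (induction I rule: infinite_finite_induct) (auto intro: SH_add SH_const)

lemma holo_SH:
  fixes f :: "complex^'n \<Rightarrow> complex"
  assumes "holo_on U f" "B \<subseteq> U" "open B"
  shows "SH B f"
proof -
  have D: "\<exists>L. (f has_derivative L) (at z) \<and> (\<forall>(c::complex) v. L (c *s v) = c * L v)" if "z \<in> B" for z
    using assms that unfolding holo_on_def by blast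
  have "continuous_on B f"
    using D has_derivative_continuous by (metis continuous_at_imp_continuous_on)
  moreover have "(\<lambda>c. f (upd y k c)) holomorphic_on {c. upd y k c \<in> B}" for y k
  proof -
    have lin: "bounded_linear (\<lambda>d::complex. axis k d :: complex^'n)"
      by (rule bounded_linear_intro[where K=1]) (auto simp: vec_eq_iff axis_def norm_axis_c[unfolded axis_def])
    have "(\<lambda>c. f (upd y k c)) field_differentiable at c" if cB: "upd y k c \<in> B" for c
    proof -
      obtain L where L: "(f has_derivative L) (at (upd y k c))" "\<forall>(c::complex) v. L (c *s v) = c * L v"
        using D[OF cB] by blast
      have g0: "((\<lambda>c. axis k (c - y$k) :: complex^'n) has_derivative (\<lambda>d. axis k (d - 0))) (at c)"
        by (rule bounded_linear.has_derivative[OF lin has_derivative_diff[OF has_derivative_ident has_derivative_const]])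
      have g: "((\<lambda>c. upd y k c) has_derivative (\<lambda>d. axis k d)) (at c)"
        unfolding upd_axis using has_derivative_add[OF has_derivative_const g0] by simp
      have "((\<lambda>c. f (upd y k c)) has_derivative (\<lambda>d. L (axis k d))) (at c)"
        by (rule has_derivative_compose[OF g L(1)])
      moreover have "(\<lambda>d. L (axis k d)) = (\<lambda>d. L (axis k 1) * d)"
      proof
        fix d :: complex
        have "axis k d = d *s axis k (1::complex)" by (simp add: vec_eq_iff axis_def vector_scalar_mult_def)
        then show "L (axis k d) = L (axis k 1) * d" using L(2) by (simp add: mult.commute)
      qed
      ultimately show ?thesis
        unfolding field_differentiable_def has_field_derivative_def by auto
    qed
    then show ?thesis
      using open_upd_set[OF assms(3)] by (simp add: holomorphic_on_open field_differentiable_def)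
  qed
  ultimately show ?thesis by (simp add: SH_def)
qed

definition ce :: "real \<Rightarrow> real \<Rightarrow> complex" where
  "ce \<rho> s = of_real \<rho> * exp (2 * of_real pi * \<i> * of_real s)"

lemma ce_nz: "\<rho> > 0 \<Longrightarrow> ce \<rho> s \<noteq> 0" by (simp add: ce_def)
lemma norm_ce: "\<rho> > 0 \<Longrightarrow> cmod (ce \<rho> s) = \<rho>"
  by (simp add: ce_def norm_mult)
lemma continuous_on_ce[continuous_intros]: "continuous_on S f \<Longrightarrow> continuous_on S (\<lambda>x. ce \<rho> (f x))"
  unfolding ce_def by (intro continuous_intros)

lemma CF:
  fixes \<phi> :: "complex \<Rightarrow> complex"
  assumes "\<rho> > 0" "continuous_on (cball c \<rho>) \<phi>" "\<phi> holomorphic_on ball c \<rho>"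
  shows "(\<phi> has_field_derivative integral {0..1} (\<lambda>s. \<phi> (c + ce \<rho> s) / ce \<rho> s)) (at c)"
proof -
  have D: "(\<phi> has_field_derivative (1 / (2 * of_real pi * \<i>) * contour_integral (circlepath c \<rho>) (\<lambda>u. \<phi> u / (u - c)^2))) (at c)"
    by (rule Cauchy_derivative_integral_circlepath(2)[OF assms(2,3)]) (simp add: assms(1))
  have "contour_integral (circlepath c \<rho>) (\<lambda>u. \<phi> u / (u - c)^2)
      = integral {0..1} (\<lambda>s. (2 * of_real pi * \<i>) * (\<phi> (c + ce \<rho> s) / ce \<rho> s))"
    unfolding contour_integral_integral vector_derivative_circlepath
    apply (rule integral_cong)
    using ce_nz[OF assms(1)]
    by (simp add: circlepath ce_def[symmetric] power2_eq_square field_simps) (simp add: ce_def mult_ac)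
  also have "\<dots> = (2 * of_real pi * \<i>) * integral {0..1} (\<lambda>s. \<phi> (c + ce \<rho> s) / ce \<rho> s)"
    by (rule integral_mult_right)
  finally show ?thesis using D by simp
qed

lemma upd_triv: "c = y$k \<Longrightarrow> upd y k c = y" by simp
lemma upd_back: "j \<noteq> k \<Longrightarrow> upd (upd y k v) j (y$j) = upd y k v" by (simp add: vec_eq_iff)

lemma upd_in:
  assumes "x \<in> ball y \<rho>" "cmod (u - x$k) \<le> \<rho>" "cball y (2*\<rho>) \<subseteq> B"
  shows "upd x k u \<in> B"
proof -
  have "dist y (upd x k u) \<le> dist y x + dist x (upd x k u)" by (rule dist_triangle)
  also have "dist x (upd x k u) = cmod (u - x$k)" using dist_upd2[of x k u] by (simp add: dist_commute)
  finally have "dist y (upd x k u) \<le> 2*\<rho>" using assms(1,2) by simp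
  then show ?thesis using assms(3) by auto
qed

lemma open_ball_rho:
  assumes "open B" "y \<in> B"
  obtains \<rho> where "\<rho> > 0" "cball y (2*\<rho>) \<subseteq> B"
proof -
  obtain e where e: "e > 0" "ball y e \<subseteq> B" using assms open_contains_ball by blast
  have "cball y (2*(e/3)) \<subseteq> ball y e" using e(1) by (auto simp: subset_iff)
  then show ?thesis using that[of "e/3"] e by auto
qed

lemma pd_repr:
  assumes B: "open B" "SH B h" and r: "\<rho> > 0" "cball y (2*\<rho>) \<subseteq> B" and x: "x \<in> ball y \<rho>"
  shows "((\<lambda>c. h (upd x k c)) has_field_derivative
            integral {0..1} (\<lambda>s. h (upd x k (x$k + ce \<rho> s)) / ce \<rho> s)) (at (x$k))"
    and "pd k h x = integral {0..1} (\<lambda>s. h (upd x k (x$k + ce \<rho> s)) / ce \<rho> s)"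
proof -
  have sub: "upd x k u \<in> B" if "u \<in> cball (x$k) \<rho>" for u
    using upd_in[OF x _ r(2), of u k] that by (simp add: dist_norm norm_minus_commute)
  have "continuous_on (cball (x$k) \<rho>) (\<lambda>c. h (upd x k c))"
    by (rule continuous_on_compose2[OF SH_cont[OF B(2)]]) (auto intro!: continuous_intros sub)
  moreover have "(\<lambda>c. h (upd x k c)) holomorphic_on ball (x$k) \<rho>"
    by (rule holomorphic_on_subset[OF SH_hol[OF B(2)]]) (use sub x r in auto)
  ultimately have "((\<lambda>c. h (upd x k c)) has_field_derivative
            integral {0..1} (\<lambda>s. h (upd x k (x$k + ce \<rho> s)) / ce \<rho> s)) (at (x$k))"
    using CF[OF r(1)] by blast
  then show "((\<lambda>c. h (upd x k c)) has_field_derivative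
            integral {0..1} (\<lambda>s. h (upd x k (x$k + ce \<rho> s)) / ce \<rho> s)) (at (x$k))"
    and "pd k h x = integral {0..1} (\<lambda>s. h (upd x k (x$k + ce \<rho> s)) / ce \<rho> s)"
    by (auto simp: pd_upd_def DERIV_imp_deriv)
qed

lemma SH_pd_cont:
  assumes B: "open B" "SH B h"
  shows "continuous_on B (pd k h)"
proof -
  have "isCont (pd k h) y" if y: "y \<in> B" for y
  proof -
    obtain \<rho> where r: "\<rho> > 0" "cball y (2*\<rho>) \<subseteq> B" using open_ball_rho[OF B(1) y] by blast
    have sub: "upd x k (x$k + ce \<rho> s) \<in> B" if "x \<in> ball y \<rho>" for x s
      using upd_in[OF that _ r(2), of "x$k + ce \<rho> s" k] norm_ce[OF r(1)] by simp
    have "continuous_on (ball y \<rho> \<times> cbox 0 1) (\<lambda>p. h (upd (fst p) k (fst p $ k + ce \<rho> (snd p))) / ce \<rho> (snd p))"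
      apply (intro continuous_intros)
       apply (rule continuous_on_compose2[OF SH_cont[OF B(2)]])
        apply (intro continuous_intros)
      using sub ce_nz[OF r(1)] by auto
    then have "continuous_on (ball y \<rho>) (\<lambda>x. integral (cbox 0 1) (\<lambda>s. h (upd x k (x$k + ce \<rho> s)) / ce \<rho> s))"
      by (intro integral_continuous_on_param) (simp add: split_beta)
    then have "continuous_on (ball y \<rho>) (pd k h)"
      by (rule continuous_on_eq) (simp add: pd_repr(2)[OF B r])
    then show ?thesis by (rule continuous_on_interior) (simp add: r(1))
  qed
  then show ?thesis by (simp add: continuous_at_imp_continuous_on)
qed

lemma SH_pd_deriv:
  assumes B: "open B" "SH B h" and r: "\<rho> > 0" "cball y (2*\<rho>) \<subseteq> B" and jk: "j \<noteq> k"
  shows "((\<lambda>c. pd k h (upd y j c)) has_field_derivative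
            integral {0..1} (\<lambda>s. pd j h (upd y k (y$k + ce \<rho> s)) / ce \<rho> s)) (at (y$j))"
proof -
  have yB: "y \<in> ball y \<rho>" using r by simp
  define f where "f c s = h (upd (upd y j c) k (y$k + ce \<rho> s)) / ce \<rho> s" for c s
  define fx where "fx c s = pd j h (upd (upd y k (y$k + ce \<rho> s)) j c) / ce \<rho> s" for c s
  have inb: "upd y j c \<in> ball y \<rho>" if "c \<in> ball (y$j) \<rho>" for c
    using that dist_upd2[of y j c] by (simp add: dist_norm norm_minus_commute dist_commute)
  have sub2: "upd (upd y j c) k (y$k + ce \<rho> s) \<in> B" if "c \<in> ball (y$j) \<rho>" for c s
    using upd_in[OF inb[OF that] _ r(2), of "y$k + ce \<rho> s" k] norm_ce[OF r(1)] jk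
    by simp
  have sub: "upd (upd y k (y$k + ce \<rho> s)) j c \<in> B" if "c \<in> ball (y$j) \<rho>" for c s
  proof -
    have "upd (upd y j c) k (y$k + ce \<rho> s) = upd (upd y k (y$k + ce \<rho> s)) j c" by (rule upd_comm[OF jk])
    then show ?thesis using sub2[OF that, of s] by simp
  qed
  have swap: "(\<lambda>c. h (upd (upd y j c) k v) / w) = (\<lambda>c. h (upd (upd y k v) j c) / w)" for v w
    using jk by (intro ext arg_cong[where f="\<lambda>x. h x / w"]) (simp add: vec_eq_iff)
  have eq: "pd k h (upd y j c) = integral (cbox 0 1) (f c)" if "c \<in> ball (y$j) \<rho>" for c
    using pd_repr(2)[OF B r inb[OF that], of k] jk by (simp add: f_def[abs_def])
  have "((\<lambda>c. integral (cbox 0 1) (f c)) has_field_derivative integral (cbox 0 1) (fx (y$j))) (at (y$j) within ball (y$j) \<rho>)"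
  proof (rule leibniz_rule_field_derivative)
    fix c t assume c: "c \<in> ball (y$j) \<rho>" and t: "t \<in> cbox (0::real) 1"
    show "((\<lambda>c. f c t) has_field_derivative fx c t) (at c within ball (y$j) \<rho>)"
      unfolding f_def fx_def swap
      by (rule has_field_derivative_at_within, rule DERIV_cdivide, rule SH_deriv_at[OF B sub[OF c]])
  next
    fix c assume c: "c \<in> ball (y$j) \<rho>"
    have "continuous_on (cbox 0 1) (f c)"
      unfolding f_def
      apply (intro continuous_intros)
       apply (rule continuous_on_compose2[OF SH_cont[OF B(2)]])
        apply (intro continuous_intros)
      using sub2[OF c] ce_nz[OF r(1)] by auto
    then show "f c integrable_on cbox 0 1" by (rule integrable_continuous)
  next
    have "continuous_on (ball (y$j) \<rho> \<times> cbox 0 1) (\<lambda>p. fx (fst p) (snd p))"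
      unfolding fx_def
      apply (intro continuous_intros)
       apply (rule continuous_on_compose2[OF SH_pd_cont[OF B]])
        apply (intro continuous_intros)
      using sub ce_nz[OF r(1)] by auto
    then show "continuous_on (ball (y$j) \<rho> \<times> cbox 0 1) (\<lambda>(c, t). fx c t)"
      by (simp add: split_beta)
  qed (simp_all add: r(1))
  moreover have "at (y$j) within ball (y$j) \<rho> = at (y$j)"
    by (rule at_within_open) (simp_all add: r(1))
  ultimately have "((\<lambda>c. integral (cbox 0 1) (f c)) has_field_derivative integral (cbox 0 1) (fx (y$j))) (at (y$j))"
    by (simp only:)
  then have "((\<lambda>c. pd k h (upd y j c)) has_field_derivative integral (cbox 0 1) (fx (y$j))) (at (y$j))"
    by (rule has_field_derivative_transform_within_open[of _ _ _ "ball (y$j) \<rho>"]) (simp_all add: r(1) eq)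
  moreover have "fx (y$j) = (\<lambda>s. pd j h (upd y k (y$k + ce \<rho> s)) / ce \<rho> s)"
    using jk by (auto simp: fx_def upd_back intro!: ext)
  ultimately show ?thesis by (simp only: cbox_interval)
qed

lemma SH_pd:
  assumes B: "open B" "SH B h"
  shows "SH B (pd k h)"
  unfolding SH_def
proof (intro conjI ballI allI)
  show "continuous_on B (pd k h)" by (rule SH_pd_cont[OF B])
next
  fix y j assume y: "y \<in> B"
  show "(\<lambda>c. pd k h (upd y j c)) holomorphic_on {c. upd y j c \<in> B}"
  proof (cases "j = k")
    case True
    have "deriv (\<lambda>c'. h (upd y k c')) holomorphic_on {c. upd y k c \<in> B}"
      by (rule holomorphic_deriv[OF SH_hol[OF B(2) y] open_upd_set[OF B(1)]])
    then show ?thesis using True by (simp add: pd_at_upd)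
  next
    case False
    have "(\<lambda>c. pd k h (upd y j c)) field_differentiable at c0" if c0: "upd y j c0 \<in> B" for c0
    proof -
      obtain \<rho> where r: "\<rho> > 0" "cball (upd y j c0) (2*\<rho>) \<subseteq> B" using open_ball_rho[OF B(1) c0] by blast
      show ?thesis
        using SH_pd_deriv[OF B r False] by (auto simp: field_differentiable_def)
    qed
    then show ?thesis using open_upd_set[OF B(1)] by (simp add: holomorphic_on_open field_differentiable_def)
  qed
qed

lemma SH_sym:
  assumes B: "open B" "SH B h" and y: "y \<in> B"
  shows "pd j (pd l h) y = pd l (pd j h) y"
proof (cases "j = l")
  case False
  obtain \<rho> where r: "\<rho> > 0" "cball y (2*\<rho>) \<subseteq> B" using open_ball_rho[OF B(1) y] by blast
  have "pd j (pd l h) y = integral {0..1} (\<lambda>s. pd j h (upd y l (y$l + ce \<rho> s)) / ce \<rho> s)"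
    using SH_pd_deriv[OF B r False] by (simp add: pd_upd_def DERIV_imp_deriv)
  also have "\<dots> = pd l (pd j h) y"
    using pd_repr(2)[OF B(1) SH_pd[OF B] r, of y l] r(1) by simp
  finally show ?thesis .
qed simp

lemma int_pow_real: "((\<lambda>t::real. t^k) has_integral (1 / (real k + 1))) {0..1}"
proof -
  have "((\<lambda>t::real. t^k) has_integral ((1::real)^Suc k / Suc k - 0^Suc k / Suc k)) {0..1}"
  proof (rule fundamental_theorem_of_calculus)
    fix x :: real assume "x \<in> {0..1}"
    have "((\<lambda>t::real. t^Suc k / Suc k) has_real_derivative (real (Suc k) * x^(Suc k - Suc 0)) / real (Suc k)) (at x within {0..1})"
      by (intro DERIV_cdivide DERIV_pow)
    moreover have "(real (Suc k) * x^(Suc k - Suc 0)) / real (Suc k) = x^k"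
      by (simp del: of_nat_Suc)
    ultimately show "((\<lambda>t::real. t^Suc k / Suc k) has_vector_derivative x^k) (at x within {0..1})"
      by (simp add: has_real_derivative_iff_has_vector_derivative)
  qed simp
  then show ?thesis by (simp add: add.commute)
qed

lemma int_pow: "integral {0..1} (\<lambda>t. complex_of_real (t^k)) = 1 / (of_nat k + 1)"
proof -
  have "((\<lambda>t. complex_of_real (t^k)) has_integral complex_of_real (1 / (real k + 1))) {0..1}"
    by (rule has_integral_of_real[OF int_pow_real])
  then show ?thesis by (simp add: integral_unique)
qed

lemma int_pow_c: "integral {0..1} (\<lambda>t. complex_of_real (t^k) * C) = C / (of_nat k + 1)"
  using int_pow[of k] by (simp add: integral_mult_left)

definition Tint :: "complex^'n \<Rightarrow> nat \<Rightarrow> (complex^'n \<Rightarrow> complex) \<Rightarrow> complex^'n \<Rightarrow> complex" where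
  "Tint z m H x = integral {0..1} (\<lambda>t. complex_of_real (t^m) * H (z + t *\<^sub>R (x - z)))"

lemma seg_in:
  fixes z y :: "'a::real_normed_vector"
  assumes "y \<in> ball z r" "0 \<le> t" "t \<le> 1"
  shows "z + t *\<^sub>R (y - z) \<in> ball z r"
proof -
  have "dist z (z + t *\<^sub>R (y - z)) = norm (t *\<^sub>R (y - z))"
    by (simp add: dist_norm)
  also have "\<dots> = t * dist z y"
    using assms(2) by (simp add: dist_norm norm_minus_commute)
  also have "\<dots> \<le> dist z y" using assms(2,3) by (simp add: mult_left_le_one_le)
  finally show ?thesis using assms(1) by simp
qed

lemma line_eq:
  "z + t *\<^sub>R (upd x j c - z) = upd (z + t *\<^sub>R (x - z)) j (z$j + of_real t * (c - z$j))"
  by (simp add: vec_eq_iff) (simp add: scaleR_conv_of_real algebra_simps)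

lemma T_deriv:
  assumes H: "SH (ball z r) H" and x: "x \<in> ball z r"
  shows "((\<lambda>c. Tint z m H (upd x j c)) has_field_derivative
          integral {0..1} (\<lambda>t. complex_of_real (t^m) * (pd j H (z + t *\<^sub>R (x - z)) * of_real t))) (at (x$j))"
proof -
  define \<delta> where "\<delta> = r - dist z x"
  have d: "\<delta> > 0" using x by (simp add: \<delta>_def)
  have inb: "upd x j c \<in> ball z r" if "c \<in> ball (x$j) \<delta>" for c
  proof -
    have "dist z (upd x j c) \<le> dist z x + dist x (upd x j c)" by (rule dist_triangle)
    also have "dist x (upd x j c) = cmod (c - x$j)" using dist_upd2[of x j c] by (simp add: dist_commute)
    finally show ?thesis using that by (simp add: \<delta>_def dist_norm norm_minus_commute)
  qed
  define f where "f c t = complex_of_real (t^m) * H (z + t *\<^sub>R (upd x j c - z))" for c t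
  define fx where "fx c t = complex_of_real (t^m) * (pd j H (z + t *\<^sub>R (upd x j c - z)) * of_real t)" for c t
  have "((\<lambda>c. integral (cbox 0 1) (f c)) has_field_derivative integral (cbox 0 1) (fx (x$j))) (at (x$j) within ball (x$j) \<delta>)"
  proof (rule leibniz_rule_field_derivative)
    fix c t assume c: "c \<in> ball (x$j) \<delta>" and t: "t \<in> cbox (0::real) 1"
    have pin: "upd (z + t *\<^sub>R (x - z)) j (z$j + of_real t * (c - z$j)) \<in> ball z r"
      using seg_in[OF inb[OF c], of t] t line_eq[of z t x j c] by simp
    have "((\<lambda>c. H (upd (z + t *\<^sub>R (x - z)) j (z$j + of_real t * (c - z$j)))) has_field_derivative
           pd j H (upd (z + t *\<^sub>R (x - z)) j (z$j + of_real t * (c - z$j))) * of_real t) (at c)"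
    proof (rule DERIV_chain2[of "\<lambda>u. H (upd (z + t *\<^sub>R (x - z)) j u)"])
      show "((\<lambda>u. H (upd (z + t *\<^sub>R (x - z)) j u)) has_field_derivative
              pd j H (upd (z + t *\<^sub>R (x - z)) j (z$j + of_real t * (c - z$j)))) (at (z$j + of_real t * (c - z$j)))"
        by (rule SH_deriv_at[OF open_ball H pin])
      show "((\<lambda>c. z$j + of_real t * (c - z$j)) has_field_derivative of_real t) (at c)"
        by (rule derivative_eq_intros refl)+ simp
    qed
    then have "((\<lambda>c. H (z + t *\<^sub>R (upd x j c - z))) has_field_derivative
           pd j H (z + t *\<^sub>R (upd x j c - z)) * of_real t) (at c)"
      unfolding line_eq .
    then have "((\<lambda>c. complex_of_real (t^m) * H (z + t *\<^sub>R (upd x j c - z))) has_field_derivative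
           complex_of_real (t^m) * (pd j H (z + t *\<^sub>R (upd x j c - z)) * of_real t)) (at c)"
      by (rule DERIV_cmult)
    then show "((\<lambda>c. f c t) has_field_derivative fx c t) (at c within ball (x$j) \<delta>)"
      unfolding f_def fx_def by (rule has_field_derivative_at_within)
  next
    fix c assume c: "c \<in> ball (x$j) \<delta>"
    have "continuous_on (cbox 0 1) (f c)"
      unfolding f_def
      apply (intro continuous_intros)
      apply (rule continuous_on_compose2[OF SH_cont[OF H]])
        apply (intro continuous_intros)
      using seg_in[OF inb[OF c]] by (auto simp: cbox_interval)
    then show "f c integrable_on cbox 0 1" by (rule integrable_continuous)
  next
    have "continuous_on (ball (x$j) \<delta> \<times> cbox 0 1) (\<lambda>p. fx (fst p) (snd p))"
      unfolding fx_def
      apply (intro continuous_intros)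
       apply (rule continuous_on_compose2[OF SH_pd_cont[OF open_ball H]])
        apply (intro continuous_intros)
      using seg_in[OF inb] by (auto simp: cbox_interval)
    then show "continuous_on (ball (x$j) \<delta> \<times> cbox 0 1) (\<lambda>(c, t). fx c t)"
      by (simp add: split_beta)
  qed (simp_all add: d)
  moreover have "at (x$j) within ball (x$j) \<delta> = at (x$j)"
    by (rule at_within_open) (simp_all add: d)
  ultimately have "((\<lambda>c. integral (cbox 0 1) (f c)) has_field_derivative integral (cbox 0 1) (fx (x$j))) (at (x$j))"
    by (simp only:)
  moreover have "(\<lambda>c. integral (cbox 0 1) (f c)) = (\<lambda>c. Tint z m H (upd x j c))"
    by (simp add: Tint_def f_def[abs_def])
  moreover have "fx (x$j) = (\<lambda>t. complex_of_real (t^m) * (pd j H (z + t *\<^sub>R (x - z)) * of_real t))"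
    by (simp add: fx_def[abs_def])
  ultimately show ?thesis by (simp only: cbox_interval)
qed

lemma SH_T:
  assumes H: "SH (ball z r) H"
  shows "SH (ball z r) (Tint z m H)"
  unfolding SH_def
proof (intro conjI ballI allI)
  have "continuous_on (ball z r \<times> cbox 0 1) (\<lambda>p. complex_of_real (snd p ^ m) * H (z + snd p *\<^sub>R (fst p - z)))"
    apply (intro continuous_intros)
    apply (rule continuous_on_compose2[OF SH_cont[OF H]])
     apply (intro continuous_intros)
    using seg_in by (auto simp: cbox_interval)
  then have "continuous_on (ball z r) (\<lambda>x. integral (cbox 0 1) (\<lambda>t. complex_of_real (t^m) * H (z + t *\<^sub>R (x - z))))"
    by (intro integral_continuous_on_param) (simp add: split_beta)
  then show "continuous_on (ball z r) (Tint z m H)"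
    by (simp add: Tint_def[abs_def])
next
  fix y j assume y: "y \<in> ball z r"
  have op: "open {c. upd y j c \<in> ball z r}" by (rule open_upd_set[OF open_ball])
  have "\<forall>c0\<in>{c. upd y j c \<in> ball z r}. \<exists>f'. ((\<lambda>c. Tint z m H (upd y j c)) has_field_derivative f') (at c0)"
  proof
    fix c0 assume "c0 \<in> {c. upd y j c \<in> ball z r}"
    then have c0: "upd y j c0 \<in> ball z r" by simp
    show "\<exists>f'. ((\<lambda>c. Tint z m H (upd y j c)) has_field_derivative f') (at c0)"
      using T_deriv[OF H c0, of m j] by auto
  qed
  then show "(\<lambda>c. Tint z m H (upd y j c)) holomorphic_on {c. upd y j c \<in> ball z r}"
    using holomorphic_on_open[OF op] by blast
qed

lemma T_pd_center:
  assumes H: "SH (ball z r) H" and r: "r > 0"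
  shows "pd j (Tint z m H) z = pd j H z / (of_nat m + 2)"
proof -
  have z: "z \<in> ball z r" using r by simp
  have "pd j (Tint z m H) z = integral {0..1} (\<lambda>t. complex_of_real (t^m) * (pd j H z * of_real t))"
    using T_deriv[OF H z, of m j] by (simp add: pd_upd_def DERIV_imp_deriv)
  also have "\<dots> = integral {0..1} (\<lambda>t. complex_of_real (t^Suc m) * pd j H z)"
    by (rule integral_cong) (simp add: mult_ac)
  also have "\<dots> = pd j H z / (of_nat m + 2)"
    using int_pow_c[of "Suc m" "pd j H z"] by (simp add: add.commute)
  finally show ?thesis .
qed

lemma wsign_swap_lt:
  fixes J :: "'n::{finite,linorder} set"
  assumes "j \<in> J" "l \<in> J" "j < l"
  shows "wsign j (J-{j}) * wsign l (J-{j}-{l}) = - (wsign l (J-{l}) * wsign j (J-{l}-{j}))"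
proof -
  define a where "a x = card {i\<in>J. i < x}" for x
  have e1: "{i\<in>J-{j}. i<j} = {i\<in>J. i<j}" by auto
  have e2: "{i\<in>J-{j}-{l}. i<l} = {i\<in>J. i<l} - {j}" by auto
  have e3: "{i\<in>J-{l}. i<l} = {i\<in>J. i<l}" by auto
  have e4: "{i\<in>J-{l}-{j}. i<j} = {i\<in>J. i<j}" using assms(3) by auto
  have jin: "j \<in> {i\<in>J. i<l}" using assms by auto
  have c2: "card ({i\<in>J. i<l} - {j}) = a l - 1"
    unfolding a_def by (rule card_Diff_singleton[OF jin]) 
  have al: "a l \<ge> 1"
    unfolding a_def using jin by (metis (no_types, lifting) One_nat_def Suc_leI card_gt_0_iff emptyE finite_subset subsetI finite)
  have "wsign j (J-{j}) * wsign l (J-{j}-{l}) = (-1)^(a j) * (-1)^(a l - 1)"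
    unfolding wsign_def e1 e2 c2 a_def by (rule refl)
  moreover have "wsign l (J-{l}) * wsign j (J-{l}-{j}) = (-1)^(a l) * (-1)^(a j)"
    unfolding wsign_def e3 e4 a_def by (rule refl)
  moreover have "(-1::complex)^(a l) = - ((-1)^(a l - 1))"
    using al by (metis Suc_diff_1 less_le_trans mult_minus1 power_Suc zero_less_one)
  ultimately show ?thesis by simp
qed

lemma wsign_swap:
  fixes J :: "'n::{finite,linorder} set"
  assumes "j \<in> J" "l \<in> J" "j \<noteq> l"
  shows "wsign j (J-{j}) * wsign l (J-{j}-{l}) = - (wsign l (J-{l}) * wsign j (J-{l}-{j}))"
proof (cases "j < l")
  case True then show ?thesis using wsign_swap_lt[OF assms(1,2)] by blast
next
  case False then have "l < j" using assms(3) by simp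
  from wsign_swap_lt[OF assms(2,1) this] show ?thesis by simp
qed

lemma dwedge_Nil: "dwedge [] K z = (if K = {} then 1 else 0)"
  by (simp add: dwedge_def form_one_def)

lemma dwedge_cons:
  fixes K :: "'n::{finite,linorder} set"
  shows "dwedge (g # gs) K z = (\<Sum>j\<in>K. wsign j (K-{j}) * pd j g z * dwedge gs (K-{j}) z)"
proof -
  define F where "F I = shuffle_sign I (K - I) * dfun g I z * dwedge gs (K - I) z" for I
  have "dwedge (g # gs) K z = (\<Sum>I\<in>Pow K. F I)"
    by (simp add: dwedge_def wedge_def F_def)
  also have "\<dots> = (\<Sum>I\<in>(\<lambda>j. {j}) ` K. F I)"
  proof (rule sum.mono_neutral_right)
    show "\<forall>I\<in>Pow K - (\<lambda>j. {j}) ` K. F I = 0"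
    proof
      fix I assume "I \<in> Pow K - (\<lambda>j. {j}) ` K"
      then have "card I \<noteq> 1" by (auto simp: card_1_singleton_iff)
      then show "F I = 0" by (simp add: F_def dfun_def)
    qed
  qed auto
  also have "\<dots> = (\<Sum>j\<in>K. F {j})"
    using sum.reindex[of "\<lambda>j. {j}" K F] by (simp add: inj_on_def o_def)
  also have "\<dots> = (\<Sum>j\<in>K. wsign j (K-{j}) * pd j g z * dwedge gs (K-{j}) z)"
  proof (rule sum.cong[OF refl])
    fix j assume "j \<in> K"
    have "{(i, l). i \<in> {j} \<and> l \<in> K - {j} \<and> l < i} = Pair j ` {l\<in>K-{j}. l<j}" by auto
    moreover have "card (Pair j ` {l\<in>K-{j}. l<j}) = card {l\<in>K-{j}. l<j}"
      by (rule card_image) (simp add: inj_on_def)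
    ultimately have "card {(i, l). i \<in> {j} \<and> l \<in> K - {j} \<and> l < i} = card {l\<in>K-{j}. l<j}"
      by simp
    then show "F {j} = wsign j (K-{j}) * pd j g z * dwedge gs (K-{j}) z"
      by (simp add: F_def shuffle_sign_def wsign_def dfun_def)
  qed
  finally show ?thesis .
qed

lemma dwedge_support:
  fixes K :: "'n::{finite,linorder} set"
  shows "dwedge gs K z \<noteq> 0 \<Longrightarrow> card K = length gs"
proof (induction gs arbitrary: K)
  case Nil then show ?case by (simp add: dwedge_Nil split: if_splits)
next
  case (Cons g gs)
  then obtain j where j: "j \<in> K" "dwedge gs (K-{j}) z \<noteq> 0"
    by (auto simp: dwedge_cons intro: ccontr elim: sum.not_neutral_contains_not_neutral)
  then have "card (K-{j}) = length gs" using Cons.IH by blast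
  then show ?case using j(1) by (simp add: card_Diff_singleton) (metis Suc_pred card_gt_0_iff emptyE finite)
qed

lemma pd_eqI: "((\<lambda>c. f (upd y j c)) has_field_derivative D) (at (y$j)) \<Longrightarrow> pd j f y = D"
  by (simp add: pd_upd_def DERIV_imp_deriv)

lemma pd_add:
  assumes "open B" "SH B f" "SH B g" "y \<in> B"
  shows "pd j (\<lambda>x. f x + g x) y = pd j f y + pd j g y"
  by (rule pd_eqI, rule DERIV_add[OF SH_deriv[OF assms(1,2,4)] SH_deriv[OF assms(1,3,4)]])

lemma pd_mult:
  assumes "open B" "SH B f" "SH B g" "y \<in> B"
  shows "pd j (\<lambda>x. f x * g x) y = pd j f y * g y + f y * pd j g y"
proof -
  have "((\<lambda>c. f (upd y j c) * g (upd y j c)) has_field_derivative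
        f y * pd j g y + pd j f y * g y) (at (y$j))"
    using DERIV_mult[OF SH_deriv[OF assms(1,2,4)] SH_deriv[OF assms(1,3,4)]] by (simp add: ac_simps)
  then show ?thesis by (simp add: pd_eqI algebra_simps)
qed

lemma pd_cmult:
  assumes "open B" "SH B f" "y \<in> B"
  shows "pd j (\<lambda>x. c * f x) y = c * pd j f y"
  by (rule pd_eqI, rule DERIV_cmult[OF SH_deriv[OF assms]])

lemma pd_multc:
  assumes "open B" "SH B f" "y \<in> B"
  shows "pd j (\<lambda>x. f x * c) y = pd j f y * c"
  by (rule pd_eqI, rule DERIV_cmult_right[OF SH_deriv[OF assms]])

lemma pd_const: "pd j (\<lambda>x. c) y = 0"
  by (rule pd_eqI) simp

lemma pd_sum:
  assumes "open B" "\<And>i. i \<in> I \<Longrightarrow> SH B (f i)" "y \<in> B"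
  shows "pd j (\<lambda>x. \<Sum>i\<in>I. f i x) y = (\<Sum>i\<in>I. pd j (f i) y)"
proof (cases "finite I")
  case True
  have "((\<lambda>c. \<Sum>i\<in>I. f i (upd y j c)) has_field_derivative (\<Sum>i\<in>I. pd j (f i) y)) (at (y$j))"
    by (rule DERIV_sum) (rule SH_deriv[OF assms(1) assms(2) assms(3)])
  then show ?thesis by (rule pd_eqI)
qed (simp add: pd_const)

lemma KP_Tint:
  "KP \<omega> J x w = (\<Sum>j\<in>J. wsign j (J - {j}) * Tint w (card (J - {j})) (pd j (\<lambda>x. \<omega> (J - {j}) x w)) x)"
  by (simp add: KP_def Tint_def pz_def pd_def)

lemma Tint_center: "Tint z k H z = H z / (of_nat k + 1)"
proof -
  have "(\<lambda>t. complex_of_real (t^k) * H (z + t *\<^sub>R (z - z))) = (\<lambda>t. complex_of_real (t^k) * H z)"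
    by simp
  then show ?thesis unfolding Tint_def by (simp only: int_pow_c)
qed

lemma SH_KP:
  assumes r: "r > 0" and H: "\<And>I. SH (ball z r) (\<lambda>x. \<omega> I x z)"
  shows "SH (ball z r) (\<lambda>x. KP \<omega> J x z)"
  unfolding KP_Tint
  by (intro SH_sum SH_cmult SH_T SH_pd[OF open_ball] H)

lemma KP_vanish:
  fixes J :: "'n::{finite,linorder} set"
  assumes r: "r > 0" and H: "\<And>I. SH (ball z r) (\<lambda>x. \<omega> I x z)"
  shows "(\<Sum>j\<in>J. wsign j (J-{j}) * pd j (\<lambda>x. KP \<omega> (J-{j}) x z) z) = 0"
proof -
  have zB: "z \<in> ball z r" using r by simp
  define G where "G I = (\<lambda>x. \<omega> I x z)" for I
  have SG: "SH (ball z r) (G I)" for I using H by (simp add: G_def)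
  define X where "X j l = pd j (pd l (G (J-{j}-{l}))) z" for j l
  define F where "F j l = wsign j (J-{j}) * wsign l (J-{j}-{l}) * X j l" for j l
  have step: "pd j (\<lambda>x. KP \<omega> (J-{j}) x z) z = (\<Sum>l\<in>J-{j}. wsign l (J-{j}-{l}) * X j l) / of_nat (card J)"
    if j: "j \<in> J" for j
  proof -
    have "pd j (\<lambda>x. KP \<omega> (J-{j}) x z) z
        = (\<Sum>l\<in>J-{j}. pd j (\<lambda>x. wsign l (J-{j}-{l}) * Tint z (card (J-{j}-{l})) (pd l (G (J-{j}-{l}))) x) z)"
      unfolding KP_Tint G_def
      by (rule pd_sum[OF open_ball _ zB]) (intro SH_cmult SH_T SH_pd[OF open_ball] H)
    also have "\<dots> = (\<Sum>l\<in>J-{j}. wsign l (J-{j}-{l}) * (X j l / of_nat (card J)))"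
    proof (rule sum.cong[OF refl])
      fix l assume l: "l \<in> J-{j}"
      have c: "card (J-{j}-{l}) + 2 = card J"
      proof -
        have c1: "card (J-{j}) = card J - 1" by (simp add: card_Diff_singleton j)
        have c2: "card (J-{j}-{l}) = card (J-{j}) - 1" using l by (simp add: card_Diff_singleton)
        have "card {j,l} \<le> card J" by (rule card_mono) (use j l in auto)
        moreover have "card {j,l} = 2" using l by auto
        ultimately show ?thesis using c1 c2 by linarith
      qed
      have "pd j (\<lambda>x. wsign l (J-{j}-{l}) * Tint z (card (J-{j}-{l})) (pd l (G (J-{j}-{l}))) x) z
          = wsign l (J-{j}-{l}) * pd j (Tint z (card (J-{j}-{l})) (pd l (G (J-{j}-{l})))) z"
        by (rule pd_cmult[OF open_ball SH_T[OF SH_pd[OF open_ball SG]] zB])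
      also have "\<dots> = wsign l (J-{j}-{l}) * (X j l / (of_nat (card (J-{j}-{l})) + 2))"
        by (simp add: T_pd_center[OF SH_pd[OF open_ball SG] r] X_def)
      also have "of_nat (card (J-{j}-{l})) + 2 = (of_nat (card J) :: complex)"
        using c by (metis of_nat_add of_nat_numeral)
      finally show "pd j (\<lambda>x. wsign l (J-{j}-{l}) * Tint z (card (J-{j}-{l})) (pd l (G (J-{j}-{l}))) x) z
          = wsign l (J-{j}-{l}) * (X j l / of_nat (card J))" .
    qed
    also have "\<dots> = (\<Sum>l\<in>J-{j}. wsign l (J-{j}-{l}) * X j l) / of_nat (card J)"
      by (simp add: sum_divide_distrib)
    finally show ?thesis .
  qed
  have "(\<Sum>j\<in>J. wsign j (J-{j}) * pd j (\<lambda>x. KP \<omega> (J-{j}) x z) z)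
      = (\<Sum>j\<in>J. \<Sum>l\<in>J-{j}. F j l) / of_nat (card J)"
  proof -
    have "(\<Sum>j\<in>J. wsign j (J-{j}) * pd j (\<lambda>x. KP \<omega> (J-{j}) x z) z)
        = (\<Sum>j\<in>J. wsign j (J-{j}) * ((\<Sum>l\<in>J-{j}. wsign l (J-{j}-{l}) * X j l) / of_nat (card J)))"
      by (rule sum.cong[OF refl]) (simp add: step)
    also have "\<dots> = (\<Sum>j\<in>J. (\<Sum>l\<in>J-{j}. F j l) / of_nat (card J))"
      by (rule sum.cong[OF refl]) (simp add: F_def sum_distrib_left mult.assoc)
    also have "\<dots> = (\<Sum>j\<in>J. \<Sum>l\<in>J-{j}. F j l) / of_nat (card J)"
      by (simp add: sum_divide_distrib)
    finally show ?thesis .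
  qed
  moreover have T0: "(\<Sum>j\<in>J. \<Sum>l\<in>J-{j}. F j l) = 0"
  proof -
    have anti: "F l j = - F j l" if "j \<in> J" "l \<in> J-{j}" for j l
    proof -
      have jl: "j \<noteq> l" "l \<in> J" using that by auto
      have e: "J-{l}-{j} = J-{j}-{l}" by auto
      have "X l j = X j l"
        unfolding X_def e using SH_sym[OF open_ball SG zB] by simp
      moreover have s: "wsign l (J-{l}) * wsign j (J-{l}-{j}) = - (wsign j (J-{j}) * wsign l (J-{j}-{l}))"
        using wsign_swap[OF that(1) jl(2) jl(1)] by simp
      ultimately show ?thesis
        unfolding F_def by simp
    qed
    have fin: "finite J" by simp
    have "(\<Sum>j\<in>J. \<Sum>l\<in>J-{j}. F j l) = (\<Sum>j\<in>J. \<Sum>l\<in>{l. l \<in> J \<and> j \<noteq> l}. F j l)"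
      by (rule sum.cong[OF refl]) (rule sum.cong, auto)
    also have "\<dots> = (\<Sum>l\<in>J. \<Sum>j\<in>{j. j \<in> J \<and> j \<noteq> l}. F j l)"
      by (rule sum.swap_restrict) simp_all
    also have "\<dots> = (\<Sum>l\<in>J. \<Sum>j\<in>J-{l}. - F l j)"
      by (rule sum.cong[OF refl], rule sum.cong) (auto simp: anti)
    also have "\<dots> = - (\<Sum>j\<in>J. \<Sum>l\<in>J-{j}. F j l)"
      by (simp add: sum_negf)
    finally show ?thesis by simp
  qed
  ultimately show ?thesis by simp
qed

definition bde :: "('a \<Rightarrow> complex) list \<Rightarrow> nat \<Rightarrow> ('a \<Rightarrow> complex) list" where
  "bde L i = take i L @ [(\<lambda>x. (L!i) x * (L!(i+1)) x)] @ drop (i+2) L"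

lemma sum_bar_d: "sum_list (map (\<lambda>(s, gs). s * F gs) (bar_d L)) = (\<Sum>i<length L - 1. (-1)^i * F (bde L i))"
  unfolding bar_d_def bde_def
  by (simp add: o_def sum_set_upt_conv_sum_list_nat[symmetric] atLeast0LessThan)

lemma length_bde: "i < length L - 1 \<Longrightarrow> length (bde L i) = length L - 1"
  by (simp add: bde_def)

lemma SH_bde:
  assumes "\<forall>g\<in>set L. SH B g" "i < length L - 1"
  shows "\<forall>g\<in>set (bde L i). SH B g"
proof -
  have "L!i \<in> set L" "L!(i+1) \<in> set L" using assms(2) by auto
  then have "SH B (\<lambda>x. (L!i) x * (L!(i+1)) x)" using assms(1) by (intro SH_mult) auto
  then show ?thesis using assms(1) set_take_subset[of i L] set_drop_subset[of "i+2" L]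
    by (auto simp: bde_def)
qed

lemma bde_nth0: "i < length L - 1 \<Longrightarrow> bde L i ! 0 = (if i = 0 then (\<lambda>x. (L!0) x * (L!1) x) else L!0)"
  by (auto simp: bde_def nth_append)

lemma bde_0: "bde L 0 = (\<lambda>x. (L!0) x * (L!1) x) # drop 2 L"
  by (simp add: bde_def numeral_2_eq_2)

definition Lbar :: "nat \<Rightarrow> ('a \<Rightarrow> complex) list \<Rightarrow> ('a \<Rightarrow> complex) list" where
  "Lbar q fs = [\<lambda>_. 1] @ take (Suc q) (drop 1 fs) @ [\<lambda>_. 1]"

lemma length_Lbar: "length fs = Suc q + 2 \<Longrightarrow> length (Lbar q fs) = q + 3"
  by (simp add: Lbar_def)

lemma SH_Lbar: "\<forall>g\<in>set fs. SH B g \<Longrightarrow> \<forall>g\<in>set (Lbar q fs). SH B g"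
  using set_take_subset[of "Suc q" "drop 1 fs"] set_drop_subset[of 1 fs]
  by (auto simp: Lbar_def SH_const)

definition Om :: "nat \<Rightarrow> (complex^('n::{finite,linorder}) \<Rightarrow> complex) list \<Rightarrow> 'n kform" where
  "Om q fs = (\<lambda>I x y. sum_list (map (\<lambda>(s, gs). s * Phi q gs I x y)
                      (bar_d ([\<lambda>_. 1] @ take (Suc q) (drop 1 fs) @ [\<lambda>_. 1]))))"

lemma Phi_Suc':
  fixes fs :: "(complex^('n::{finite,linorder}) \<Rightarrow> complex) list"
  shows "Phi (Suc q) fs = (if CARD('n::{finite,linorder}) < Suc q then (\<lambda>J z w. 0)
      else (\<lambda>J z w. (fs!0) z * KP (Om q fs) J z w * (fs!(Suc q + 1)) w))"
  by (simp add: Om_def)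

lemma Om_eq: "Om q fs I x y = (\<Sum>i<length (Lbar q fs) - 1. (-1)^i * Phi q (bde (Lbar q fs) i) I x y)"
  unfolding Om_def Lbar_def by (rule sum_bar_d)

lemma SH_Phi:
  fixes gs :: "(complex^('n::{finite,linorder}) \<Rightarrow> complex) list"
  assumes r: "r > 0"
  shows "length gs = m + 2 \<Longrightarrow> \<forall>g\<in>set gs. SH (ball z r) g \<Longrightarrow> SH (ball z r) (\<lambda>x. Phi m gs I x z)"
proof (induction m arbitrary: gs I)
  case 0
  have "gs!0 \<in> set gs" using 0 by auto
  then have "SH (ball z r) (gs!0)" using 0 by auto
  then show ?case by (cases "I = {}") (auto intro: SH_mult SH_const)
next
  case (Suc m)
  have SO: "SH (ball z r) (\<lambda>x. Om m gs I' x z)" for I'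
    unfolding Om_eq
  proof (intro SH_sum SH_cmult)
    fix i assume "i \<in> {..<length (Lbar m gs) - 1}"
    then have i: "i < length (Lbar m gs) - 1" by simp
    show "SH (ball z r) (\<lambda>x. Phi m (bde (Lbar m gs) i) I' x z)"
      using Suc.IH[of "bde (Lbar m gs) i"] length_bde[OF i] length_Lbar[of gs m] Suc.prems
        SH_bde[OF SH_Lbar[OF Suc.prems(2)] i] by simp
  qed
  have g0: "gs!0 \<in> set gs" using Suc by auto
  show ?case
  proof (cases "CARD('n) < Suc m")
    case True then show ?thesis by (simp del: Phi.simps(2) add: Phi_Suc' SH_const)
  next
    case False
    then show ?thesis
      using Suc.prems g0
      by (simp del: Phi.simps(2) add: Phi_Suc') (intro SH_mult SH_const SH_KP[OF r] SO, auto)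
  qed
qed

lemma SH_Om:
  fixes gs :: "(complex^('n::{finite,linorder}) \<Rightarrow> complex) list"
  assumes r: "r > 0" and "length gs = Suc m + 2" "\<forall>g\<in>set gs. SH (ball z r) g"
  shows "SH (ball z r) (\<lambda>x. Om m gs I x z)"
  unfolding Om_eq
proof (intro SH_sum SH_cmult)
  fix i assume "i \<in> {..<length (Lbar m gs) - 1}"
  then have i: "i < length (Lbar m gs) - 1" by simp
  show "SH (ball z r) (\<lambda>x. Phi m (bde (Lbar m gs) i) I x z)"
    using SH_Phi[OF r, of "bde (Lbar m gs) i" m] length_bde[OF i] length_Lbar[of gs m] assms
      SH_bde[OF SH_Lbar[OF assms(3)] i] by simp
qed

lemma resum:
  fixes w :: "'j \<Rightarrow> complex"
  shows "(\<Sum>j\<in>J. w j * (\<Sum>i<n. s i * ((A i j + hz i * Bq i j) * c i)))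
       = (\<Sum>i<n. s i * c i * (\<Sum>j\<in>J. w j * A i j)) + (\<Sum>i<n. s i * c i * hz i * (\<Sum>j\<in>J. w j * Bq i j))"
proof -
  have "(\<Sum>j\<in>J. w j * (\<Sum>i<n. s i * ((A i j + hz i * Bq i j) * c i)))
      = (\<Sum>j\<in>J. \<Sum>i<n. s i * c i * (w j * A i j) + s i * c i * hz i * (w j * Bq i j))"
    apply (rule sum.cong[OF refl])
    apply (subst sum_distrib_left)
    apply (rule sum.cong[OF refl])
    by (simp add: algebra_simps)
  also have "\<dots> = (\<Sum>i<n. \<Sum>j\<in>J. s i * c i * (w j * A i j) + s i * c i * hz i * (w j * Bq i j))"
    by (rule sum.swap)
  also have "\<dots> = (\<Sum>i<n. s i * c i * (\<Sum>j\<in>J. w j * A i j) + s i * c i * hz i * (\<Sum>j\<in>J. w j * Bq i j))"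
    by (simp add: sum.distrib sum_distrib_left)
  also have "\<dots> = (\<Sum>i<n. s i * c i * (\<Sum>j\<in>J. w j * A i j)) + (\<Sum>i<n. s i * c i * hz i * (\<Sum>j\<in>J. w j * Bq i j))"
    by (rule sum.distrib)
  finally show ?thesis .
qed

lemma KPc:
  fixes J :: "'n::{finite,linorder} set"
  shows "KP \<omega> J z z = (\<Sum>j\<in>J. wsign j (J-{j}) * pd j (\<lambda>x. \<omega> (J-{j}) x z) z) / of_nat (card J)"
proof -
  have "KP \<omega> J z z = (\<Sum>j\<in>J. wsign j (J-{j}) * pd j (\<lambda>x. \<omega> (J-{j}) x z) z / of_nat (card J))"
    unfolding KP_Tint Tint_center
  proof (rule sum.cong[OF refl])
    fix j assume j: "j \<in> J"
    have "of_nat (card (J - {j})) + 1 = (of_nat (card J) :: complex)"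
    proof -
      have "Suc (card (J - {j})) = card J" by (rule card_Suc_Diff1[OF _ j]) simp
      then show ?thesis by (metis of_nat_Suc add.commute)
    qed
    then show "wsign j (J - {j}) * (pd j (\<lambda>x. \<omega> (J - {j}) x z) z / (of_nat (card (J - {j})) + 1)) =
         wsign j (J - {j}) * pd j (\<lambda>x. \<omega> (J - {j}) x z) z / of_nat (card J)" by simp
  qed
  then show ?thesis by (simp add: sum_divide_distrib)
qed

lemma dw_final:
  fixes J :: "'n::{finite,linorder} set"
  assumes "length R = m"
  shows "(\<Sum>j\<in>J. wsign j (J-{j}) * pd j f1 z * dwedge R (J-{j}) z) / fact m / of_nat (card J)
       = (1 / fact (Suc m)) * dwedge (f1 # R) J z"
proof (cases "card J = Suc m")
  case True
  have fe: "fact (Suc m) = (of_nat (card J) * fact m :: complex)" using True by simp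
  have nz: "(of_nat (card J) :: complex) \<noteq> 0" "(fact m :: complex) \<noteq> 0"
    unfolding of_nat_eq_0_iff True by simp_all
  have gen: "S / fact m / of_nat (card J) = 1 / fact (Suc m) * S" for S :: complex
    unfolding fe using nz by (simp add: field_simps)
  show ?thesis unfolding dwedge_cons by (rule gen)
next
  case False
  have "dwedge R (J-{j}) z = 0" if "j \<in> J" for j
  proof (rule ccontr)
    assume "dwedge R (J-{j}) z \<noteq> 0"
    then have "card (J-{j}) = m" using dwedge_support assms by metis
    moreover have "Suc (card (J - {j})) = card J" by (rule card_Suc_Diff1[OF _ that]) simp
    ultimately show False using False by simp
  qed
  then have "(\<Sum>j\<in>J. wsign j (J-{j}) * pd j f1 z * dwedge R (J-{j}) z) = 0" by simp
  then show ?thesis unfolding dwedge_cons by simp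
qed

lemma sumpd0:
  fixes gs :: "(complex^('n::{finite,linorder}) \<Rightarrow> complex) list"
  assumes r: "r > 0" and len: "length gs = Suc 0 + 2" and SH: "\<forall>g\<in>set gs. SH (ball z r) g"
  shows "(\<Sum>j\<in>J. wsign j (J-{j}) * pd j (\<lambda>x. Om 0 gs (J-{j}) x z) z)
       = (\<Sum>j\<in>J. wsign j (J-{j}) * pd j (gs!1) z * dwedge (drop 1 (take (Suc 0) (drop 1 gs))) (J-{j}) z) / fact 0"
proof -
  have zB: "z \<in> ball z r" using r by simp
  obtain a b c where gs: "gs = [a, b, c]"
    using len by (metis (no_types) Suc_length_conv add_2_eq_Suc' length_0_conv)
  have SHb: "SH (ball z r) b" using SH gs by simp
  have Om0: "Om 0 gs I x z = (if I = {} then b x - b z else 0)" for I x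
    by (simp add: Om_eq Lbar_def bde_def gs numeral_2_eq_2 lessThan_Suc)
  have pdO: "pd j (\<lambda>x. Om 0 gs I x z) z = (if I = {} then pd j b z else 0)" for I j
  proof (cases "I = {}")
    case True
    have "((\<lambda>c. b (upd z j c) - b z) has_field_derivative pd j b z - 0) (at (z$j))"
      by (rule DERIV_diff[OF SH_deriv[OF open_ball SHb zB] DERIV_const])
    then show ?thesis unfolding Om0 using True by (simp add: pd_eqI)
  next
    case False then show ?thesis unfolding Om0 by (simp add: pd_const)
  qed
  show ?thesis
    unfolding pdO by (simp add: gs dwedge_Nil if_distrib cong: if_cong)
qed

lemma sumpdS:
  fixes gs :: "(complex^('n::{finite,linorder}) \<Rightarrow> complex) list"
  assumes r: "r > 0" and len: "length gs = Suc (Suc m') + 2" and SH: "\<forall>g\<in>set gs. SH (ball z r) g"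
    and card: "Suc (Suc m') \<le> CARD('n)"
    and IH: "\<And>gs' J. length gs' = Suc m' + 2 \<Longrightarrow> \<forall>g\<in>set gs'. SH (ball z r) g \<Longrightarrow>
               KP (Om m' gs') J z z = 1 / fact (Suc m') * dwedge (take (Suc m') (drop 1 gs')) J z"
  shows "(\<Sum>j\<in>J. wsign j (J-{j}) * pd j (\<lambda>x. Om (Suc m') gs (J-{j}) x z) z)
       = (\<Sum>j\<in>J. wsign j (J-{j}) * pd j (gs!1) z * dwedge (drop 1 (take (Suc (Suc m')) (drop 1 gs))) (J-{j}) z) / fact (Suc m')"
proof -
  define m where "m = Suc m'"
  have zB: "z \<in> ball z r" using r by simp
  define L where "L = Lbar m gs"
  have lenL: "length L = m + 3" using length_Lbar[of gs m] len by (simp add: L_def m_def)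
  define n where "n = length L - 1"
  have n: "n = Suc (Suc m)" using lenL by (simp add: n_def)
  define E where "E i = bde L i" for i
  have SHL: "\<forall>g\<in>set L. SH (ball z r) g" unfolding L_def by (rule SH_Lbar[OF SH])
  have lenE: "length (E i) = Suc m' + 2" if "i < n" for i
    using length_bde[of i L] that lenL by (simp add: E_def n_def m_def)
  have SHE: "\<forall>g\<in>set (E i). SH (ball z r) g" if "i < n" for i
    using SH_bde[OF SHL, of i] that by (simp add: E_def n_def)
  define h where "h i = E i ! 0" for i
  define c where "c i = (E i ! (m+1)) z" for i
  define K where "K i I x = KP (Om m' (E i)) I x z" for i I x
  have SHh: "SH (ball z r) (h i)" if "i < n" for i
    using SHE[OF that] lenE[OF that] by (simp add: h_def)
  have SHO: "SH (ball z r) (\<lambda>x. Om m' (E i) I x z)" if "i < n" for i I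
    by (rule SH_Om[OF r lenE[OF that] SHE[OF that]])
  have SHK: "SH (ball z r) (K i I)" if "i < n" for i I
    unfolding K_def[abs_def] by (rule SH_KP[OF r]) (rule SHO[OF that])
  have PhiE: "Phi m (E i) I x z = h i x * K i I x * c i" for i I x
  proof -
    have "\<not> CARD('n) < Suc m'" using card by simp
    then show ?thesis
      by (simp del: Phi.simps(2) add: m_def Phi_Suc' h_def K_def c_def)
  qed
  have pdPhi: "pd j (\<lambda>x. Phi m (E i) I x z) z = (pd j (h i) z * K i I z + h i z * pd j (K i I) z) * c i"
    if "i < n" for i I j
    unfolding PhiE
    by (simp add: pd_multc[OF open_ball SH_mult[OF SHh[OF that] SHK[OF that]] zB]
                  pd_mult[OF open_ball SHh[OF that] SHK[OF that] zB])
  have SHP: "SH (ball z r) (\<lambda>x. Phi m (E i) I x z)" if "i < n" for i I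
    using SH_Phi[OF r, of "E i" m] lenE[OF that] SHE[OF that] by (simp add: m_def)
  have pdOm: "pd j (\<lambda>x. Om m gs I x z) z
      = (\<Sum>i<n. (-1)^i * ((pd j (h i) z * K i I z + h i z * pd j (K i I) z) * c i))" for I j
  proof -
    have "pd j (\<lambda>x. Om m gs I x z) z = pd j (\<lambda>x. \<Sum>i<n. (-1)^i * Phi m (E i) I x z) z"
      unfolding Om_eq n_def L_def E_def ..
    also have "\<dots> = (\<Sum>i<n. pd j (\<lambda>x. (-1)^i * Phi m (E i) I x z) z)"
      by (rule pd_sum[OF open_ball _ zB]) (intro SH_cmult SHP, simp)
    also have "\<dots> = (\<Sum>i<n. (-1)^i * ((pd j (h i) z * K i I z + h i z * pd j (K i I) z) * c i))"
      by (rule sum.cong[OF refl]) (simp add: pd_cmult[OF open_ball SHP zB] pdPhi)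
    finally show ?thesis .
  qed
  define A where "A i j = pd j (h i) z * K i (J-{j}) z" for i j
  define Bq where "Bq i j = pd j (K i (J-{j})) z" for i j
  have "(\<Sum>j\<in>J. wsign j (J-{j}) * pd j (\<lambda>x. Om m gs (J-{j}) x z) z)
      = (\<Sum>j\<in>J. wsign j (J-{j}) * (\<Sum>i<n. (-1)^i * ((A i j + h i z * Bq i j) * c i)))"
    by (simp add: pdOm A_def Bq_def)
  also have "\<dots> = (\<Sum>i<n. (-1)^i * c i * (\<Sum>j\<in>J. wsign j (J-{j}) * A i j))
                 + (\<Sum>i<n. (-1)^i * c i * h i z * (\<Sum>j\<in>J. wsign j (J-{j}) * Bq i j))"
    by (rule resum)
  also have "(\<Sum>i<n. (-1)^i * c i * h i z * (\<Sum>j\<in>J. wsign j (J-{j}) * Bq i j)) = 0"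
  proof (rule sum.neutral, rule ballI)
    fix i assume "i \<in> {..<n}"
    then have i: "i < n" by simp
    have "(\<Sum>j\<in>J. wsign j (J-{j}) * Bq i j) = 0"
      unfolding Bq_def K_def by (rule KP_vanish[OF r]) (rule SHO[OF i])
    then show "(-1)^i * c i * h i z * (\<Sum>j\<in>J. wsign j (J-{j}) * Bq i j) = 0" by simp
  qed
  also have "(\<Sum>i<n. (-1)^i * c i * (\<Sum>j\<in>J. wsign j (J-{j}) * A i j))
      = c 0 * (\<Sum>j\<in>J. wsign j (J-{j}) * A 0 j)"
  proof -
    have z1: "(\<Sum>j\<in>J. wsign j (J-{j}) * A (Suc i) j) = 0" if "Suc i < n" for i
    proof -
      have "h (Suc i) = L!0" using bde_nth0[of "Suc i" L] that by (simp add: h_def E_def n_def)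
      also have "L!0 = (\<lambda>_. 1)" by (simp add: L_def Lbar_def)
      finally show ?thesis by (simp add: A_def pd_const)
    qed
    have "(\<Sum>i<n. (-1)^i * c i * (\<Sum>j\<in>J. wsign j (J-{j}) * A i j))
        = c 0 * (\<Sum>j\<in>J. wsign j (J-{j}) * A 0 j) + (\<Sum>i<Suc m. (-1)^(Suc i) * c (Suc i) * (\<Sum>j\<in>J. wsign j (J-{j}) * A (Suc i) j))"
      unfolding n by (subst sum.lessThan_Suc_shift) simp
    also have "(\<Sum>i<Suc m. (-1)^(Suc i) * c (Suc i) * (\<Sum>j\<in>J. wsign j (J-{j}) * A (Suc i) j)) = 0"
      by (rule sum.neutral) (simp add: z1 n)
    finally show ?thesis by simp
  qed
  finally have S1: "(\<Sum>j\<in>J. wsign j (J-{j}) * pd j (\<lambda>x. Om m gs (J-{j}) x z) z)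
      = c 0 * (\<Sum>j\<in>J. wsign j (J-{j}) * A 0 j)" by simp
  have L1: "L!1 = gs!1" using len by (simp add: L_def Lbar_def nth_append)
  have h0: "h 0 = gs!1"
    using bde_nth0[of 0 L] lenL L1 by (simp add: h_def E_def L_def Lbar_def)
  have c0: "c 0 = 1"
    using lenL len by (simp add: c_def E_def bde_0 L_def Lbar_def m_def nth_append)
  define R where "R = drop 1 (take (Suc m) (drop 1 gs))"
  have E0: "take (Suc m') (drop 1 (E 0)) = R"
    using len by (simp add: E_def bde_0 L_def Lbar_def R_def m_def)
  have K0: "K 0 I z = 1 / fact (Suc m') * dwedge R I z" for I
    unfolding K_def using IH[OF lenE SHE, of 0 I] E0 n by simp
  have "c 0 * (\<Sum>j\<in>J. wsign j (J-{j}) * A 0 j)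
      = (\<Sum>j\<in>J. wsign j (J-{j}) * pd j (gs!1) z * dwedge R (J-{j}) z) / fact (Suc m')"
    by (simp add: c0 A_def h0 K0 sum_divide_distrib mult_ac)
  with S1 show ?thesis by (simp add: m_def R_def)
qed

lemma take_drop1: "length gs \<ge> 2 \<Longrightarrow> take (Suc m) (drop 1 gs) = gs!1 # drop 1 (take (Suc m) (drop 1 gs))"
proof -
  assume "length gs \<ge> 2"
  then have "drop 1 gs = gs!1 # drop (Suc 1) gs" by (simp add: Cons_nth_drop_Suc)
  then show ?thesis by simp
qed

lemma mainA:
  fixes gs :: "(complex^('n::{finite,linorder}) \<Rightarrow> complex) list"
  assumes r: "r > 0"
  shows "length gs = Suc m + 2 \<Longrightarrow> \<forall>g\<in>set gs. SH (ball z r) g \<Longrightarrow> Suc m \<le> CARD('n) \<Longrightarrow>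
         KP (Om m gs) J z z = 1 / fact (Suc m) * dwedge (take (Suc m) (drop 1 gs)) J z"
proof (induction m arbitrary: gs J)
  case 0
  have "KP (Om 0 gs) J z z = (\<Sum>j\<in>J. wsign j (J-{j}) * pd j (\<lambda>x. Om 0 gs (J-{j}) x z) z) / of_nat (card J)"
    by (rule KPc)
  also have "\<dots> = (\<Sum>j\<in>J. wsign j (J-{j}) * pd j (gs!1) z * dwedge (drop 1 (take (Suc 0) (drop 1 gs))) (J-{j}) z) / fact 0 / of_nat (card J)"
    using sumpd0[OF r 0(1,2)] by simp
  also have "\<dots> = 1 / fact (Suc 0) * dwedge (gs!1 # drop 1 (take (Suc 0) (drop 1 gs))) J z"
    by (rule dw_final) (use 0 in simp)
  also have "gs!1 # drop 1 (take (Suc 0) (drop 1 gs)) = take (Suc 0) (drop 1 gs)"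
    using take_drop1[of gs 0] 0 by simp
  finally show ?case .
next
  case (Suc m')
  have IH: "KP (Om m' gs') J' z z = 1 / fact (Suc m') * dwedge (take (Suc m') (drop 1 gs')) J' z"
    if "length gs' = Suc m' + 2" "\<forall>g\<in>set gs'. SH (ball z r) g" for gs' J'
    using Suc.IH[OF that] Suc.prems(3) by simp
  have "KP (Om (Suc m') gs) J z z = (\<Sum>j\<in>J. wsign j (J-{j}) * pd j (\<lambda>x. Om (Suc m') gs (J-{j}) x z) z) / of_nat (card J)"
    by (rule KPc)
  also have "\<dots> = (\<Sum>j\<in>J. wsign j (J-{j}) * pd j (gs!1) z * dwedge (drop 1 (take (Suc (Suc m')) (drop 1 gs))) (J-{j}) z) / fact (Suc m') / of_nat (card J)"
    using sumpdS[OF r Suc.prems(1,2,3) IH] by simp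
  also have "\<dots> = 1 / fact (Suc (Suc m')) * dwedge (gs!1 # drop 1 (take (Suc (Suc m')) (drop 1 gs))) J z"
    by (rule dw_final) (use Suc.prems in simp)
  also have "gs!1 # drop 1 (take (Suc (Suc m')) (drop 1 gs)) = take (Suc (Suc m')) (drop 1 gs)"
    using take_drop1[of gs "Suc m'"] Suc.prems by simp
  finally show ?case .
qed

theorem lemma3p6:
  fixes U :: "(complex^('n::{finite,linorder})) set"
    and fs :: "(complex^('n::{finite,linorder}) \<Rightarrow> complex) list"
    and q :: nat
  assumes "stein U"
    and "q \<ge> 1"
    and "length fs = q + 2"
    and "\<forall>f\<in>set fs. holo_on U f"
  shows "\<forall>J. \<forall>z\<in>U. Phi_tilde q fs J z =
           (1 / fact q) * (fs!0) z * (fs!(q+1)) z * dwedge (take q (drop 1 fs)) J z"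
proof (intro allI ballI)
  fix J and z assume zU: "z \<in> U"
  have oU: "open U" using assms(1) by (simp add: stein_def)
  obtain r where r: "r > 0" "ball z r \<subseteq> U" using oU zU open_contains_ball by blast
  have SHf: "\<forall>g\<in>set fs. SH (ball z r) g"
    using assms(4) holo_SH[OF _ r(2) open_ball] by blast
  obtain m where q: "q = Suc m" using assms(2) by (cases q) auto
  show "Phi_tilde q fs J z = (1 / fact q) * (fs!0) z * (fs!(q+1)) z * dwedge (take q (drop 1 fs)) J z"
  proof (cases "CARD('n) < Suc m")
    case True
    have "card J \<le> CARD('n)" by (rule card_mono) auto
    moreover have "length (take q (drop 1 fs)) = q" using assms(3) by simp
    ultimately have "dwedge (take q (drop 1 fs)) J z = 0"
      using dwedge_support True q by fastforce
    then show ?thesis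
      using True by (simp del: Phi.simps(2) add: Phi_tilde_def q Phi_Suc')
  next
    case False
    have "KP (Om m fs) J z z = 1 / fact (Suc m) * dwedge (take (Suc m) (drop 1 fs)) J z"
      by (rule mainA[OF r(1)]) (use assms(3) SHf False q in auto)
    then show ?thesis
      using False by (simp del: Phi.simps(2) add: Phi_tilde_def q Phi_Suc' mult_ac)
  qed
qed

end
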